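(* Let $\Delta$ be a thick building and let $G$ be a group acting strongly transitively on $\Delta$ with respect to the complete apartment system $\overline{\mathcal{A}}$. Fix an apartment $\Sigma_0\in\overline{\mathcal{A}}$, let $N=\mathrm{Stab}_G(\Sigma_0)$ and $T=\{t\in N\mid tC=C \text{ for all chambers } C \text{ of }\Sigma_0\}$. If there exists $n_0\in N\setminus T$ such that every element of the coset $n_0T$ has finite order in $G$, then no torsionfree subgroup of $G$ acts weakly transitively on $\Delta$.
   Context: $\overline{\mathcal{A}}$ is the set of all apartments of $\Delta$. A type-preserving action of $G$ on $\Delta$ is strongly transitive with respect to a system of apartments $\mathcal{A}$ if it is transitive on pairs $(C,\Sigma)$ with $\Sigma\in\mathcal{A}$ and $C$ a chamber of $\Sigma$. A type-preserving action of a group $H$ on $\Delta$ is weakly transitive if there is an apartment $\Sigma\in\overline{\mathcal{A}}$ such that $\mathrm{Stab}_H(\Sigma)$ acts transitively on the set of chambers of $\Sigma$. *)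

theory Defs
  imports "HOL-Algebra.Algebra"
begin

definition wprod :: "('w, 'm) monoid_scheme \<Rightarrow> 'w list \<Rightarrow> 'w" where
  "wprod W xs = foldr (\<lambda>s acc. s \<otimes>\<^bsub>W\<^esub> acc) xs \<one>\<^bsub>W\<^esub>"

definition cox_len :: "('w, 'm) monoid_scheme \<Rightarrow> 'w set \<Rightarrow> 'w \<Rightarrow> nat" where
  "cox_len W S w = (LEAST n. \<exists>xs. length xs = n \<and> set xs \<subseteq> S \<and> wprod W xs = w)"

text \<open>Coxeter system: group generated by involutions S satisfying the exchange condition (E).\<close>
definition coxeter_system :: "('w, 'm) monoid_scheme \<Rightarrow> 'w set \<Rightarrow> bool" where
  "coxeter_system W S \<longleftrightarrow> group W \<and> S \<subseteq> carrier W \<and>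
     (\<forall>s\<in>S. s \<noteq> \<one>\<^bsub>W\<^esub> \<and> s \<otimes>\<^bsub>W\<^esub> s = \<one>\<^bsub>W\<^esub>) \<and>
     generate W S = carrier W \<and>
     (\<forall>xs s. set xs \<subseteq> S \<longrightarrow> length xs = cox_len W S (wprod W xs) \<longrightarrow> s \<in> S \<longrightarrow>
        cox_len W S (s \<otimes>\<^bsub>W\<^esub> wprod W xs) \<le> cox_len W S (wprod W xs) \<longrightarrow>
        (\<exists>i < length xs. s \<otimes>\<^bsub>W\<^esub> wprod W xs = wprod W (take i xs @ drop (Suc i) xs)))"

definition building :: "('w, 'm) monoid_scheme \<Rightarrow> 'w set \<Rightarrow> 'c set \<Rightarrow> ('c \<Rightarrow> 'c \<Rightarrow> 'w) \<Rightarrow> bool" where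
  "building W S Ch \<delta> \<longleftrightarrow> coxeter_system W S \<and>
     (\<forall>C\<in>Ch. \<forall>D\<in>Ch. \<delta> C D \<in> carrier W) \<and>
     (\<forall>C\<in>Ch. \<forall>D\<in>Ch. \<delta> C D = \<one>\<^bsub>W\<^esub> \<longleftrightarrow> C = D) \<and>
     (\<forall>C\<in>Ch. \<forall>D\<in>Ch. \<forall>C'\<in>Ch. \<forall>s\<in>S. \<delta> C' C = s \<longrightarrow>
        \<delta> C' D \<in> {s \<otimes>\<^bsub>W\<^esub> \<delta> C D, \<delta> C D} \<and>
        (cox_len W S (s \<otimes>\<^bsub>W\<^esub> \<delta> C D) = cox_len W S (\<delta> C D) + 1 \<longrightarrow>
           \<delta> C' D = s \<otimes>\<^bsub>W\<^esub> \<delta> C D)) \<and>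
     (\<forall>C\<in>Ch. \<forall>D\<in>Ch. \<forall>s\<in>S. \<exists>C'\<in>Ch. \<delta> C' C = s \<and> \<delta> C' D = s \<otimes>\<^bsub>W\<^esub> \<delta> C D)"

text \<open>Thick: every panel contains at least three chambers, i.e. every chamber has
  at least two distinct s-adjacent chambers for each s in S.\<close>
definition thick_building :: "('w, 'm) monoid_scheme \<Rightarrow> 'w set \<Rightarrow> 'c set \<Rightarrow> ('c \<Rightarrow> 'c \<Rightarrow> 'w) \<Rightarrow> bool" where
  "thick_building W S Ch \<delta> \<longleftrightarrow> building W S Ch \<delta> \<and>
     (\<forall>C\<in>Ch. \<forall>s\<in>S. \<exists>D1\<in>Ch. \<exists>D2\<in>Ch. D1 \<noteq> D2 \<and> \<delta> C D1 = s \<and> \<delta> C D2 = s)"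

text \<open>The complete apartment system: all images of isometries from (W, \<delta>_W) into the building,
  where \<delta>_W(x,y) = x^{-1} y.\<close>
definition all_apartments :: "('w, 'm) monoid_scheme \<Rightarrow> 'c set \<Rightarrow> ('c \<Rightarrow> 'c \<Rightarrow> 'w) \<Rightarrow> 'c set set" where
  "all_apartments W Ch \<delta> = {\<Sigma>. \<Sigma> \<subseteq> Ch \<and> (\<exists>f. f ` carrier W = \<Sigma> \<and>
      (\<forall>x\<in>carrier W. \<forall>y\<in>carrier W. \<delta> (f x) (f y) = inv\<^bsub>W\<^esub> x \<otimes>\<^bsub>W\<^esub> y))}"

definition type_preserving_action ::
  "('g, 'n) monoid_scheme \<Rightarrow> 'c set \<Rightarrow> ('c \<Rightarrow> 'c \<Rightarrow> 'w) \<Rightarrow> ('g \<Rightarrow> 'c \<Rightarrow> 'c) \<Rightarrow> bool" where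
  "type_preserving_action G Ch \<delta> \<phi> \<longleftrightarrow> group_action G Ch \<phi> \<and>
     (\<forall>g\<in>carrier G. \<forall>C\<in>Ch. \<forall>D\<in>Ch. \<delta> (\<phi> g C) (\<phi> g D) = \<delta> C D)"

definition setwise_stab :: "'g set \<Rightarrow> ('g \<Rightarrow> 'c \<Rightarrow> 'c) \<Rightarrow> 'c set \<Rightarrow> 'g set" where
  "setwise_stab H \<phi> \<Sigma> = {h \<in> H. \<phi> h ` \<Sigma> = \<Sigma>}"

definition strongly_transitive ::
  "('g, 'n) monoid_scheme \<Rightarrow> ('g \<Rightarrow> 'c \<Rightarrow> 'c) \<Rightarrow> 'c set set \<Rightarrow> bool" where
  "strongly_transitive G \<phi> A \<longleftrightarrow>
     (\<forall>\<Sigma>\<in>A. \<forall>\<Sigma>'\<in>A. \<forall>C\<in>\<Sigma>. \<forall>C'\<in>\<Sigma>'. \<exists>g\<in>carrier G. \<phi> g ` \<Sigma> = \<Sigma>' \<and> \<phi> g C = C')"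

definition weakly_transitive ::
  "'g set \<Rightarrow> ('g \<Rightarrow> 'c \<Rightarrow> 'c) \<Rightarrow> 'c set set \<Rightarrow> bool" where
  "weakly_transitive H \<phi> Abar \<longleftrightarrow>
     (\<exists>\<Sigma>\<in>Abar. \<forall>C\<in>\<Sigma>. \<forall>D\<in>\<Sigma>. \<exists>h\<in>setwise_stab H \<phi> \<Sigma>. \<phi> h C = D)"

definition torsionfree_subgroup :: "'g set \<Rightarrow> ('g, 'n) monoid_scheme \<Rightarrow> bool" where
  "torsionfree_subgroup H G \<longleftrightarrow> subgroup H G \<and>
     (\<forall>h\<in>H. \<forall>k::nat. k > 0 \<longrightarrow> h [^]\<^bsub>G\<^esub> k = \<one>\<^bsub>G\<^esub> \<longrightarrow> h = \<one>\<^bsub>G\<^esub>)"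

end

theory Submission
  imports Defs
begin

lemma conj_pow:
  fixes G (structure)
  assumes "group G" "g \<in> carrier G" "h \<in> carrier G"
  shows "(inv\<^bsub>G\<^esub> g \<otimes>\<^bsub>G\<^esub> h \<otimes>\<^bsub>G\<^esub> g) [^]\<^bsub>G\<^esub> (k::nat) = inv\<^bsub>G\<^esub> g \<otimes>\<^bsub>G\<^esub> (h [^]\<^bsub>G\<^esub> k) \<otimes>\<^bsub>G\<^esub> g"
proof -
  interpret group G by fact
  have gi: "\<And>y. y \<in> carrier G \<Longrightarrow> g \<otimes> (inv g \<otimes> y) = y"
    using assms by (simp flip: m_assoc)
  show ?thesis
proof (induction k)
  case 0
  then show ?case using assms by simp
next
  case (Suc k)
  have "(inv g \<otimes> h \<otimes> g) [^] Suc k = (inv g \<otimes> (h [^] k) \<otimes> g) \<otimes> (inv g \<otimes> h \<otimes> g)"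
    using Suc by simp
  also have "\<dots> = inv g \<otimes> (h [^] k \<otimes> (g \<otimes> inv g) \<otimes> h) \<otimes> g"
    using assms by (simp add: m_assoc gi)
  also have "\<dots> = inv g \<otimes> (h [^] Suc k) \<otimes> g"
    using assms by simp
  finally show ?case .
qed
qed

lemma conj_one:
  fixes G (structure)
  assumes "group G" "g \<in> carrier G" "x \<in> carrier G" "inv\<^bsub>G\<^esub> g \<otimes>\<^bsub>G\<^esub> x \<otimes>\<^bsub>G\<^esub> g = \<one>\<^bsub>G\<^esub>"
  shows "x = \<one>\<^bsub>G\<^esub>"
proof -
  interpret group G by fact
  have "g \<otimes> (inv g \<otimes> x \<otimes> g) \<otimes> inv g = x"
    using assms(2,3) by (simp add: m_assoc flip: m_assoc[of g "inv g"])
  thus ?thesis using assms by simp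
qed

lemma inv_cancel:
  assumes "group_action G E \<phi>" "g \<in> carrier G" "x \<in> E"
  shows "\<phi> (inv\<^bsub>G\<^esub> g) (\<phi> g x) = x"
proof -
  interpret group_action G E \<phi> by fact
  interpret G: group G using group_hom unfolding group_hom_def by blast
  have "\<phi> (inv\<^bsub>G\<^esub> g) (\<phi> g x) = \<phi> (inv\<^bsub>G\<^esub> g \<otimes>\<^bsub>G\<^esub> g) x"
    using assms composition_rule[of x "inv\<^bsub>G\<^esub> g" g] by simp
  also have "\<dots> = \<phi> \<one>\<^bsub>G\<^esub> x" using assms by simp
  also have "\<dots> = x" using assms id_eq_one[symmetric] by simp
  finally show ?thesis .
qed

lemma apartment_rigid:
  assumes grpW: "group W"
    and A: "\<Sigma> \<in> all_apartments W Ch \<delta>"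
    and C: "C \<in> \<Sigma>" and D: "D \<in> \<Sigma>"
    and gD: "E \<in> \<Sigma>"
    and eq: "\<delta> C E = \<delta> C D"
  shows "E = D"
proof -
  interpret group W by fact
  from A obtain f where f: "f ` carrier W = \<Sigma>"
    "\<forall>x\<in>carrier W. \<forall>y\<in>carrier W. \<delta> (f x) (f y) = inv\<^bsub>W\<^esub> x \<otimes>\<^bsub>W\<^esub> y"
    unfolding all_apartments_def by blast
  obtain c where c: "c \<in> carrier W" "C = f c" using f(1) C by blast
  obtain d where d: "d \<in> carrier W" "D = f d" using f(1) D by blast
  obtain e where e: "e \<in> carrier W" "E = f e" using f(1) gD by blast
  have "inv\<^bsub>W\<^esub> c \<otimes>\<^bsub>W\<^esub> e = \<delta> (f c) (f e)" using f(2) c(1) e(1) by metis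
  also have "\<dots> = \<delta> (f c) (f d)" using eq c(2) d(2) e(2) by metis
  also have "\<dots> = inv\<^bsub>W\<^esub> c \<otimes>\<^bsub>W\<^esub> d" using f(2) c(1) d(1) by metis
  finally have "inv\<^bsub>W\<^esub> c \<otimes>\<^bsub>W\<^esub> e = inv\<^bsub>W\<^esub> c \<otimes>\<^bsub>W\<^esub> d" .
  hence "e = d" using l_cancel[OF _ e(1) d(1) inv_closed[OF c(1)]] by blast
  thus ?thesis using d(2) e(2) by blast
qed

theorem corollary2p4:
  fixes W :: "('w, 'm) monoid_scheme" and S :: "'w set"
    and Ch :: "'c set" and \<delta> :: "'c \<Rightarrow> 'c \<Rightarrow> 'w"
    and G :: "('g, 'n) monoid_scheme" and \<phi> :: "'g \<Rightarrow> 'c \<Rightarrow> 'c"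
    and \<Sigma>\<^sub>0 :: "'c set"
  assumes thick: "thick_building W S Ch \<delta>"
    and grp: "group G"
    and act: "type_preserving_action G Ch \<delta> \<phi>"
    and strong: "strongly_transitive G \<phi> (all_apartments W Ch \<delta>)"
    and apt: "\<Sigma>\<^sub>0 \<in> all_apartments W Ch \<delta>"
    and tors: "\<exists>n\<^sub>0 \<in> setwise_stab (carrier G) \<phi> \<Sigma>\<^sub>0 -
                  {t \<in> setwise_stab (carrier G) \<phi> \<Sigma>\<^sub>0. \<forall>C\<in>\<Sigma>\<^sub>0. \<phi> t C = C}.
               \<forall>t \<in> {t \<in> setwise_stab (carrier G) \<phi> \<Sigma>\<^sub>0. \<forall>C\<in>\<Sigma>\<^sub>0. \<phi> t C = C}.
                 \<exists>k::nat. k > 0 \<and> (n\<^sub>0 \<otimes>\<^bsub>G\<^esub> t) [^]\<^bsub>G\<^esub> k = \<one>\<^bsub>G\<^esub>"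
  shows "\<not> (\<exists>H. torsionfree_subgroup H G \<and> weakly_transitive H \<phi> (all_apartments W Ch \<delta>))"
proof
  assume "\<exists>H. torsionfree_subgroup H G \<and> weakly_transitive H \<phi> (all_apartments W Ch \<delta>)"
  then obtain H where tf: "torsionfree_subgroup H G" and wt: "weakly_transitive H \<phi> (all_apartments W Ch \<delta>)"
    by blast
  interpret G: group G by fact
  have grpW: "group W" using thick unfolding thick_building_def building_def coxeter_system_def by blast
  have ga: "group_action G Ch \<phi>" and iso: "\<forall>g\<in>carrier G. \<forall>C\<in>Ch. \<forall>D\<in>Ch. \<delta> (\<phi> g C) (\<phi> g D) = \<delta> C D"
    using act unfolding type_preserving_action_def by auto
  interpret GA: group_action G Ch \<phi> by fact
  have subH: "subgroup H G" and torf: "\<forall>h\<in>H. \<forall>k::nat. k > 0 \<longrightarrow> h [^]\<^bsub>G\<^esub> k = \<one>\<^bsub>G\<^esub> \<longrightarrow> h = \<one>\<^bsub>G\<^esub>"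
    using tf unfolding torsionfree_subgroup_def by auto
  obtain \<Sigma> where \<Sigma>: "\<Sigma> \<in> all_apartments W Ch \<delta>"
    and trans: "\<forall>C\<in>\<Sigma>. \<forall>D\<in>\<Sigma>. \<exists>h\<in>setwise_stab H \<phi> \<Sigma>. \<phi> h C = D"
    using wt unfolding weakly_transitive_def by blast
  obtain n0 where n0: "n0 \<in> carrier G" "\<phi> n0 ` \<Sigma>\<^sub>0 = \<Sigma>\<^sub>0"
    and n0nT: "\<not> (\<forall>C\<in>\<Sigma>\<^sub>0. \<phi> n0 C = C)"
    and fin: "\<And>t. t \<in> carrier G \<Longrightarrow> \<phi> t ` \<Sigma>\<^sub>0 = \<Sigma>\<^sub>0 \<Longrightarrow> (\<forall>C\<in>\<Sigma>\<^sub>0. \<phi> t C = C) \<Longrightarrow>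
                 \<exists>k::nat. k > 0 \<and> (n0 \<otimes>\<^bsub>G\<^esub> t) [^]\<^bsub>G\<^esub> k = \<one>\<^bsub>G\<^esub>"
  proof -
    from tors obtain n0 where a: "n0 \<in> setwise_stab (carrier G) \<phi> \<Sigma>\<^sub>0 -
                  {t \<in> setwise_stab (carrier G) \<phi> \<Sigma>\<^sub>0. \<forall>C\<in>\<Sigma>\<^sub>0. \<phi> t C = C}"
      and b: "\<forall>t \<in> {t \<in> setwise_stab (carrier G) \<phi> \<Sigma>\<^sub>0. \<forall>C\<in>\<Sigma>\<^sub>0. \<phi> t C = C}.
                 \<exists>k::nat. k > 0 \<and> (n0 \<otimes>\<^bsub>G\<^esub> t) [^]\<^bsub>G\<^esub> k = \<one>\<^bsub>G\<^esub>" by blast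
    show ?thesis
      apply (rule that[of n0])
      using a b unfolding setwise_stab_def by auto
  qed
  have S0sub: "\<Sigma>\<^sub>0 \<subseteq> Ch" and Ssub: "\<Sigma> \<subseteq> Ch" using apt \<Sigma> unfolding all_apartments_def by auto
  have oW: "\<one>\<^bsub>W\<^esub> \<in> carrier W" using grpW by (simp add: group.is_monoid monoid.one_closed)
  have "\<Sigma>\<^sub>0 \<noteq> {}" using apt oW unfolding all_apartments_def by blast
  then obtain C0 where C0: "C0 \<in> \<Sigma>\<^sub>0" by blast
  have "\<Sigma> \<noteq> {}" using \<Sigma> oW unfolding all_apartments_def by blast
  then obtain D0 where D0: "D0 \<in> \<Sigma>" by blast
  have "\<exists>g\<in>carrier G. \<phi> g ` \<Sigma>\<^sub>0 = \<Sigma> \<and> \<phi> g C0 = D0"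
    using strong apt \<Sigma> C0 D0 unfolding strongly_transitive_def by blast
  then obtain g where g: "g \<in> carrier G" "\<phi> g ` \<Sigma>\<^sub>0 = \<Sigma>" by blast
  have a1: "\<phi> g C0 \<in> \<Sigma>" and a2: "\<phi> g (\<phi> n0 C0) \<in> \<Sigma>" using g C0 n0 by auto
  obtain h where hs: "h \<in> setwise_stab H \<phi> \<Sigma>" and h3: "\<phi> h (\<phi> g C0) = \<phi> g (\<phi> n0 C0)"
    using bspec[OF bspec[OF trans a1] a2] by blast
  have h: "h \<in> H" "\<phi> h ` \<Sigma> = \<Sigma>" "\<phi> h (\<phi> g C0) = \<phi> g (\<phi> n0 C0)"
    using hs h3 unfolding setwise_stab_def by auto
  have hG: "h \<in> carrier G" using subgroup.mem_carrier[OF subH h(1)] .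
  define t where "t = inv\<^bsub>G\<^esub> n0 \<otimes>\<^bsub>G\<^esub> (inv\<^bsub>G\<^esub> g \<otimes>\<^bsub>G\<^esub> h \<otimes>\<^bsub>G\<^esub> g)"
  have tG: "t \<in> carrier G" using n0 g hG unfolding t_def by simp
  have ig: "\<phi> (inv\<^bsub>G\<^esub> g) ` \<Sigma> = \<Sigma>\<^sub>0"
  proof -
    have "\<phi> (inv\<^bsub>G\<^esub> g) ` \<Sigma> = \<phi> (inv\<^bsub>G\<^esub> g) ` \<phi> g ` \<Sigma>\<^sub>0" using g by simp
    also have "\<dots> = \<Sigma>\<^sub>0"
    proof -
      have "\<And>x. x \<in> \<Sigma>\<^sub>0 \<Longrightarrow> \<phi> (inv\<^bsub>G\<^esub> g) (\<phi> g x) = x"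
        using g S0sub inv_cancel[OF ga] by blast
      thus ?thesis by (simp add: image_image)
    qed
    finally show ?thesis .
  qed
  have in0: "\<phi> (inv\<^bsub>G\<^esub> n0) ` \<Sigma>\<^sub>0 = \<Sigma>\<^sub>0"
  proof -
    have "\<phi> (inv\<^bsub>G\<^esub> n0) ` \<Sigma>\<^sub>0 = \<phi> (inv\<^bsub>G\<^esub> n0) ` \<phi> n0 ` \<Sigma>\<^sub>0" using n0 by simp
    also have "\<dots> = \<Sigma>\<^sub>0"
    proof -
      have "\<And>x. x \<in> \<Sigma>\<^sub>0 \<Longrightarrow> \<phi> (inv\<^bsub>G\<^esub> n0) (\<phi> n0 x) = x"
        using n0 S0sub inv_cancel[OF ga] by blast
      thus ?thesis by (simp add: image_image)
    qed
    finally show ?thesis .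
  qed
  have phit: "\<And>x. x \<in> Ch \<Longrightarrow> \<phi> t x = \<phi> (inv\<^bsub>G\<^esub> n0) (\<phi> (inv\<^bsub>G\<^esub> g) (\<phi> h (\<phi> g x)))"
  proof -
    fix x assume x: "x \<in> Ch"
    have gx: "\<phi> g x \<in> Ch" using GA.element_image[OF g(1) x refl] .
    have ig: "inv\<^bsub>G\<^esub> g \<in> carrier G" "inv\<^bsub>G\<^esub> n0 \<in> carrier G" using g n0 by auto
    have "\<phi> t x = \<phi> (inv\<^bsub>G\<^esub> n0) (\<phi> (inv\<^bsub>G\<^esub> g \<otimes>\<^bsub>G\<^esub> h \<otimes>\<^bsub>G\<^esub> g) x)"
      unfolding t_def using GA.composition_rule[OF x ig(2)] ig hG g by simp
    also have "\<dots> = \<phi> (inv\<^bsub>G\<^esub> n0) (\<phi> (inv\<^bsub>G\<^esub> g \<otimes>\<^bsub>G\<^esub> h) (\<phi> g x))"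
      using GA.composition_rule[OF x _ g(1), of "inv\<^bsub>G\<^esub> g \<otimes>\<^bsub>G\<^esub> h"] ig hG by simp
    also have "\<dots> = \<phi> (inv\<^bsub>G\<^esub> n0) (\<phi> (inv\<^bsub>G\<^esub> g) (\<phi> h (\<phi> g x)))"
      using GA.composition_rule[OF gx ig(1) hG] by simp
    finally show "\<phi> t x = \<phi> (inv\<^bsub>G\<^esub> n0) (\<phi> (inv\<^bsub>G\<^esub> g) (\<phi> h (\<phi> g x)))" .
  qed
  have tstab: "\<phi> t ` \<Sigma>\<^sub>0 = \<Sigma>\<^sub>0"
  proof -
    have "\<phi> t ` \<Sigma>\<^sub>0 = \<phi> (inv\<^bsub>G\<^esub> n0) ` \<phi> (inv\<^bsub>G\<^esub> g) ` \<phi> h ` \<phi> g ` \<Sigma>\<^sub>0"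
      using phit S0sub unfolding image_image by (intro image_cong) auto
    thus ?thesis using g h ig in0 by simp
  qed
  have tC0: "\<phi> t C0 = C0"
  proof -
    have "\<phi> t C0 = \<phi> (inv\<^bsub>G\<^esub> n0) (\<phi> (inv\<^bsub>G\<^esub> g) (\<phi> g (\<phi> n0 C0)))"
      using phit[of C0] C0 S0sub h(3) by (simp add: subset_iff)
    also have "\<dots> = \<phi> (inv\<^bsub>G\<^esub> n0) (\<phi> n0 C0)"
      using inv_cancel[OF ga g(1), of "\<phi> n0 C0"] GA.element_image[OF n0(1) _ refl, of C0] C0 S0sub by (simp add: subset_iff)
    also have "\<dots> = C0"
      using inv_cancel[OF ga n0(1), of C0] C0 S0sub by (simp add: subset_iff)
    finally show ?thesis .
  qed
  have tT: "\<forall>C\<in>\<Sigma>\<^sub>0. \<phi> t C = C"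
  proof
    fix D assume D: "D \<in> \<Sigma>\<^sub>0"
    have "\<delta> C0 (\<phi> t D) = \<delta> (\<phi> t C0) (\<phi> t D)" using tC0 by simp
    also have "\<dots> = \<delta> C0 D" using iso tG C0 D S0sub by (simp add: subset_iff)
    finally have e: "\<delta> C0 (\<phi> t D) = \<delta> C0 D" .
    have "\<phi> t D \<in> \<Sigma>\<^sub>0" using D tstab by (metis imageI)
    thus "\<phi> t D = D"
      using apartment_rigid[OF grpW apt C0 D _ e] by simp
  qed
  obtain k :: nat where k: "k > 0" "(n0 \<otimes>\<^bsub>G\<^esub> t) [^]\<^bsub>G\<^esub> k = \<one>\<^bsub>G\<^esub>"
    using fin[OF tG tstab tT] by blast
  have nt: "n0 \<otimes>\<^bsub>G\<^esub> t = inv\<^bsub>G\<^esub> g \<otimes>\<^bsub>G\<^esub> h \<otimes>\<^bsub>G\<^esub> g"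
  proof -
    have X: "inv\<^bsub>G\<^esub> g \<otimes>\<^bsub>G\<^esub> h \<otimes>\<^bsub>G\<^esub> g \<in> carrier G" using n0 g hG by simp
    have "n0 \<otimes>\<^bsub>G\<^esub> t = (n0 \<otimes>\<^bsub>G\<^esub> inv\<^bsub>G\<^esub> n0) \<otimes>\<^bsub>G\<^esub> (inv\<^bsub>G\<^esub> g \<otimes>\<^bsub>G\<^esub> h \<otimes>\<^bsub>G\<^esub> g)"
      unfolding t_def using n0 X by (simp only: G.m_assoc G.inv_closed)
    also have "\<dots> = inv\<^bsub>G\<^esub> g \<otimes>\<^bsub>G\<^esub> h \<otimes>\<^bsub>G\<^esub> g" using n0 X by simp
    finally show ?thesis .
  qed
  have "inv\<^bsub>G\<^esub> g \<otimes>\<^bsub>G\<^esub> (h [^]\<^bsub>G\<^esub> k) \<otimes>\<^bsub>G\<^esub> g = \<one>\<^bsub>G\<^esub>"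
    using k nt conj_pow[OF grp g(1) hG] by simp
  hence "h [^]\<^bsub>G\<^esub> k = \<one>\<^bsub>G\<^esub>"
    using g hG conj_one[OF grp g(1), of "h [^]\<^bsub>G\<^esub> k"] by simp
  hence h1: "h = \<one>\<^bsub>G\<^esub>" using torf h k by blast
  have "n0 \<otimes>\<^bsub>G\<^esub> t = \<one>\<^bsub>G\<^esub>" using nt h1 g by simp
  have "\<forall>C\<in>\<Sigma>\<^sub>0. \<phi> n0 C = C"
  proof
    fix C assume C: "C \<in> \<Sigma>\<^sub>0"
    have "\<phi> n0 C = \<phi> n0 (\<phi> t C)" using tT C by simp
    also have "\<dots> = \<phi> (n0 \<otimes>\<^bsub>G\<^esub> t) C" using GA.composition_rule[of C n0 t] n0(1) tG C S0sub by (simp add: subset_iff)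
    also have "\<dots> = \<phi> \<one>\<^bsub>G\<^esub> C" using \<open>n0 \<otimes>\<^bsub>G\<^esub> t = \<one>\<^bsub>G\<^esub>\<close> by simp
    also have "\<dots> = C" using fun_cong[OF GA.id_eq_one, of C] C S0sub by (simp add: subset_iff)
    finally show "\<phi> n0 C = C" .
  qed
  thus False using n0nT by simp
qed

end
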